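(* Let $T$ be a triangulation of the oriented 2-sphere (a simplicial complex), $R$ its vertex–edge incidence matrix ($R_{v,e}=1$ if $v\in e$, else $0$), and $E$ the edge–edge matrix defined below. Then $R\cdot E=0$.
   Context: $E=(E_{e,e'})_{e,e'\in\mathcal E(T)}$: if $e\neq e'$ lie in a common face whose edges in positive cyclic order are $\{a,b\},\{b,c\},\{c,a\}$, then $E_{e,e'}=-1$ if $e'$ immediately follows $e$ and $+1$ if $e'$ immediately precedes $e$; otherwise $E_{e,e'}=0$. *)

theory Defs
  imports "HOL-Analysis.Analysis"
begin

definition simplicial_complex :: "'v set set \<Rightarrow> bool" where
  "simplicial_complex K \<longleftrightarrow> K \<noteq> {} \<and>
     (\<forall>\<sigma>\<in>K. \<sigma> \<noteq> {} \<and> finite \<sigma> \<and> (\<forall>\<tau>. \<tau> \<subseteq> \<sigma> \<and> \<tau> \<noteq> {} \<longrightarrow> \<tau> \<in> K))"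

definition vertices_of :: "'v set set \<Rightarrow> 'v set" where
  "vertices_of K = \<Union>K"

definition edges_of :: "'v set set \<Rightarrow> 'v set set" where
  "edges_of K = {\<sigma>\<in>K. card \<sigma> = 2}"

definition faces_of :: "'v set set \<Rightarrow> 'v set set" where
  "faces_of K = {\<sigma>\<in>K. card \<sigma> = 3}"

definition realization :: "('v::finite) set set \<Rightarrow> (real ^ 'v) set" where
  "realization K = (\<Union>\<sigma>\<in>K. convex hull ((\<lambda>v. axis v 1) ` \<sigma>))"

definition sphere_triangulation :: "('v::finite) set set \<Rightarrow> bool" where
  "sphere_triangulation K \<longleftrightarrow> simplicial_complex K \<and>
     realization K homeomorphic sphere (0::real^3) 1"

text \<open>An orientation: for every face F, \<open>nx F\<close> is the successor map of the positive
  cyclic order of F (a fixed-point free permutation of the 3-set F, i.e. a 3-cycle);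
  coherence (orientation of the sphere): every oriented edge (a,b) of T occurs, as
  a successor pair, in exactly one face.\<close>
definition oriented :: "'v set set \<Rightarrow> ('v set \<Rightarrow> 'v \<Rightarrow> 'v) \<Rightarrow> bool" where
  "oriented K nx \<longleftrightarrow>
     (\<forall>F\<in>faces_of K. nx F ` F \<subseteq> F \<and> inj_on (nx F) F \<and> (\<forall>a\<in>F. nx F a \<noteq> a)) \<and>
     (\<forall>a b. {a, b} \<in> edges_of K \<and> a \<noteq> b \<longrightarrow> (\<exists>!F. F \<in> faces_of K \<and> a \<in> F \<and> nx F a = b))"

definition incR :: "'v \<Rightarrow> 'v set \<Rightarrow> int" where
  "incR v e = (if v \<in> e then 1 else 0)"

text \<open>In a face with positive cyclic order a, b, c the edges in
  positive cyclic order are {a,b},{b,c},{c,a}; e' immediately follows e if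
  e = {a, nx a} and e' = {nx a, nx (nx a)}; e' immediately precedes e if
  e = {a, nx a} and e' = {nx (nx a), a}.\<close>
definition edgeE :: "'v set set \<Rightarrow> ('v set \<Rightarrow> 'v \<Rightarrow> 'v) \<Rightarrow> 'v set \<Rightarrow> 'v set \<Rightarrow> int" where
  "edgeE K nx e e' =
     (if e \<noteq> e' \<and> (\<exists>F\<in>faces_of K. \<exists>a\<in>F. e = {a, nx F a} \<and> e' = {nx F a, nx F (nx F a)})
      then -1
      else if e \<noteq> e' \<and> (\<exists>F\<in>faces_of K. \<exists>a\<in>F. e = {a, nx F a} \<and> e' = {nx F (nx F a), a})
      then 1 else 0)"

end

theory Submission
  imports Defs
begin

lemma cyc3:
  assumes "card F = 3" "f ` F \<subseteq> F" "inj_on f F" "\<forall>a\<in>F. f a \<noteq> a" "a \<in> F"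
  shows "f a \<noteq> a \<and> f (f a) \<noteq> a \<and> f (f a) \<noteq> f a \<and> F = {a, f a, f (f a)} \<and> f (f (f a)) = a"
proof -
  have fa: "f a \<in> F" "f a \<noteq> a" using assms by auto
  have ffa: "f (f a) \<in> F" "f (f a) \<noteq> f a" using assms fa by auto
  have n: "f (f a) \<noteq> a"
  proof
    assume h: "f (f a) = a"
    have fin: "finite F" using assms(1) card.infinite by fastforce
    have "card {a, f a} = 2" using fa by simp
    hence "{a, f a} \<noteq> F" using assms(1) by auto
    then obtain c where c: "c \<in> F" "c \<notin> {a, f a}" using assms(5) fa by blast
    have fc: "f c \<in> F" "f c \<noteq> c" using assms c by auto
    have "f c \<noteq> f a" using assms(3) c fa assms(5) by (metis inj_on_def insertCI)
    moreover have "f c \<noteq> a" using assms(3) c fa h by (metis inj_on_def insertCI)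
    moreover have "card {a, f a, c} = 3" using fa c by (auto simp: card_insert_if)
    hence "{a, f a, c} = F" using fin assms(1) fa c assms(5)
      by (metis card_subset_eq empty_subsetI insert_subset)
    ultimately show False using fc by auto
  qed
  have fin: "finite F" using assms(1) card.infinite by fastforce
  have "card {a, f a, f (f a)} = 3" using fa ffa n by simp
  hence F: "F = {a, f a, f (f a)}" using fin assms(1) fa ffa assms(5)
    by (metis card_subset_eq empty_subsetI insert_subset)
  have fff: "f (f (f a)) \<in> F" "f (f (f a)) \<noteq> f (f a)" using assms ffa by auto
  have "f (f (f a)) \<noteq> f a" using assms(3) fa ffa assms(5) n by (metis inj_on_def)
  hence "f (f (f a)) = a" using fff F by auto
  thus ?thesis using fa ffa n F by auto
qed

theorem lemma1:
  fixes K :: "('v::finite) set set" and nx :: "'v set \<Rightarrow> 'v \<Rightarrow> 'v"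
  assumes "sphere_triangulation K"
    and "oriented K nx"
    and "v \<in> vertices_of K"
    and "e' \<in> edges_of K"
  shows "(\<Sum>e\<in>edges_of K. incR v e * edgeE K nx e e') = 0"
proof -
  have sc: "simplicial_complex K" using assms(1) sphere_triangulation_def by blast
  have sub: "\<And>s t. s \<in> K \<Longrightarrow> t \<subseteq> s \<Longrightarrow> t \<noteq> {} \<Longrightarrow> t \<in> K"
    using sc unfolding simplicial_complex_def by blast
  have fprop: "\<And>F. F \<in> faces_of K \<Longrightarrow> card F = 3 \<and> nx F ` F \<subseteq> F \<and> inj_on (nx F) F \<and> (\<forall>a\<in>F. nx F a \<noteq> a)"
    using assms(2) unfolding oriented_def faces_of_def by auto
  have uq: "\<And>a b. {a, b} \<in> edges_of K \<Longrightarrow> a \<noteq> b \<Longrightarrow> (\<exists>!F. F \<in> faces_of K \<and> a \<in> F \<and> nx F a = b)"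
    using assms(2) unfolding oriented_def by blast
  obtain x y where e': "e' = {x,y}" "x \<noteq> y" using assms(4) unfolding edges_of_def
    by (auto simp: card_2_iff)
  have exy: "{x,y} \<in> edges_of K" "{y,x} \<in> edges_of K" using assms(4) e' by (auto simp: insert_commute)
  obtain F1 where F1: "F1 \<in> faces_of K" "x \<in> F1" "nx F1 x = y"
    and u1: "\<And>F. F \<in> faces_of K \<Longrightarrow> x \<in> F \<Longrightarrow> nx F x = y \<Longrightarrow> F = F1"
    using uq[OF exy(1) e'(2)] by blast
  obtain F2 where F2: "F2 \<in> faces_of K" "y \<in> F2" "nx F2 y = x"
    and u2: "\<And>F. F \<in> faces_of K \<Longrightarrow> y \<in> F \<Longrightarrow> nx F y = x \<Longrightarrow> F = F2"
    using uq[OF exy(2)] e'(2) by metis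
  define z where "z = nx F1 y"
  define w where "w = nx F2 x"
  have z1: "nx F1 y = z" and w1: "nx F2 x = w" by (simp_all add: z_def w_def)
  have c1: "F1 = {x,y,z}" "y \<noteq> x" "z \<noteq> x" "z \<noteq> y" "nx F1 z = x"
    using cyc3[of F1 "nx F1" x] fprop[OF F1(1)] F1 using z1 by auto
  have c2: "F2 = {y,x,w}" "w \<noteq> y" "w \<noteq> x" "nx F2 w = y"
    using cyc3[of F2 "nx F2" y] fprop[OF F2(1)] F2 using w1 by auto
  have zw: "z \<noteq> w"
  proof
    assume "z = w"
    hence "F1 = F2" using c1(1) c2(1) by (simp add: insert_commute)
    thus False using F2(3) c1(3) z1 by simp
  qed
  have F1K: "F1 \<in> K" and F2K: "F2 \<in> K" using F1 F2 by (auto simp: faces_of_def)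
  have edg: "{a,b} \<in> edges_of K" if "{a,b} \<subseteq> F" "F \<in> K" "a \<noteq> b" for a b F
    using sub[OF that(2,1)] that(3) by (auto simp: edges_of_def)
  have E1: "{z,x} \<in> edges_of K" "{y,z} \<in> edges_of K"
    using edg[OF _ F1K] c1 by auto
  have E2: "{w,y} \<in> edges_of K" "{x,w} \<in> edges_of K"
    using edg[OF _ F2K] c2 by auto
  have key: "edgeE K nx e e' = (if e = {z,x} then -1 else 0) + (if e = {w,y} then -1 else 0)
      + (if e = {y,z} then 1 else 0) + (if e = {x,w} then 1 else 0)" for e
  proof -
    have P1: "(e \<noteq> e' \<and> (\<exists>F\<in>faces_of K. \<exists>a\<in>F. e = {a, nx F a} \<and> e' = {nx F a, nx F (nx F a)}))
       \<longleftrightarrow> (e = {z,x} \<or> e = {w,y})"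
    proof
      assume "e \<noteq> e' \<and> (\<exists>F\<in>faces_of K. \<exists>a\<in>F. e = {a, nx F a} \<and> e' = {nx F a, nx F (nx F a)})"
      then obtain F a where Fa: "F \<in> faces_of K" "a \<in> F" "e = {a, nx F a}" "e' = {nx F a, nx F (nx F a)}" by blast
      have c: "nx F (nx F (nx F a)) = a" "nx F a \<in> F" "nx F (nx F a) \<in> F"
        using cyc3[of F "nx F" a] fprop[OF Fa(1)] Fa(2) by auto
      from Fa(4) e' have "(nx F a = x \<and> nx F (nx F a) = y) \<or> (nx F a = y \<and> nx F (nx F a) = x)"
        by (auto simp: doubleton_eq_iff)
      thus "e = {z,x} \<or> e = {w,y}"
      proof
        assume h: "nx F a = x \<and> nx F (nx F a) = y"
        hence "F = F1" using u1 Fa(1) c by auto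
        thus ?thesis using h c Fa(3) z1 by auto
      next
        assume h: "nx F a = y \<and> nx F (nx F a) = x"
        hence "F = F2" using u2 Fa(1) c by auto
        thus ?thesis using h c Fa(3) w1 by auto
      qed
    next
      assume "e = {z,x} \<or> e = {w,y}"
      thus "e \<noteq> e' \<and> (\<exists>F\<in>faces_of K. \<exists>a\<in>F. e = {a, nx F a} \<and> e' = {nx F a, nx F (nx F a)})"
      proof
        assume h: "e = {z,x}"
        have "e \<noteq> e'" using h e' c1 by (auto simp: doubleton_eq_iff)
        moreover have "z \<in> F1" using c1 by auto
        ultimately show ?thesis using h F1 c1 e' by blast
      next
        assume h: "e = {w,y}"
        have "e \<noteq> e'" using h e' c2 by (auto simp: doubleton_eq_iff)
        moreover have "w \<in> F2" using c2 by auto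
        ultimately show ?thesis using h F2 c2 e' by (metis insert_commute)
      qed
    qed
    have P2: "(e \<noteq> e' \<and> (\<exists>F\<in>faces_of K. \<exists>a\<in>F. e = {a, nx F a} \<and> e' = {nx F (nx F a), a}))
       \<longleftrightarrow> (e = {y,z} \<or> e = {x,w})"
    proof
      assume "e \<noteq> e' \<and> (\<exists>F\<in>faces_of K. \<exists>a\<in>F. e = {a, nx F a} \<and> e' = {nx F (nx F a), a})"
      then obtain F a where Fa: "F \<in> faces_of K" "a \<in> F" "e = {a, nx F a}" "e' = {nx F (nx F a), a}" by blast
      have c: "nx F (nx F (nx F a)) = a" "nx F a \<in> F" "nx F (nx F a) \<in> F"
        using cyc3[of F "nx F" a] fprop[OF Fa(1)] Fa(2) by auto
      from Fa(4) e' have "(nx F (nx F a) = x \<and> a = y) \<or> (nx F (nx F a) = y \<and> a = x)"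
        by (auto simp: doubleton_eq_iff)
      thus "e = {y,z} \<or> e = {x,w}"
      proof
        assume h: "nx F (nx F a) = x \<and> a = y"
        hence "F = F1" using u1 Fa(1) c by metis
        thus ?thesis using h c Fa(3) z1 by auto
      next
        assume h: "nx F (nx F a) = y \<and> a = x"
        hence "F = F2" using u2 Fa(1) c by metis
        thus ?thesis using h c Fa(3) w1 by auto
      qed
    next
      assume "e = {y,z} \<or> e = {x,w}"
      thus "e \<noteq> e' \<and> (\<exists>F\<in>faces_of K. \<exists>a\<in>F. e = {a, nx F a} \<and> e' = {nx F (nx F a), a})"
      proof
        assume h: "e = {y,z}"
        have "e \<noteq> e'" using h e' c1 by (auto simp: doubleton_eq_iff)
        moreover have "y \<in> F1" using c1 by auto
        ultimately show ?thesis using h F1 c1 e' z1 by (metis insert_commute)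
      next
        assume h: "e = {x,w}"
        have "e \<noteq> e'" using h e' c2 by (auto simp: doubleton_eq_iff)
        moreover have "x \<in> F2" using c2 by auto
        ultimately show ?thesis using h F2 c2 e' w1 by (metis insert_commute)
      qed
    qed
    have d: "{z,x} \<noteq> {w,y}" "{z,x} \<noteq> {y,z}" "{z,x} \<noteq> {x,w}" "{w,y} \<noteq> {y,z}"
      "{w,y} \<noteq> {x,w}" "{y,z} \<noteq> {x,w}"
      using zw c1 c2 by (auto simp: doubleton_eq_iff)
    show ?thesis unfolding edgeE_def using P1 P2 d by auto
  qed
  have fin: "finite (edges_of K)" by simp
  have "(\<Sum>e\<in>edges_of K. incR v e * edgeE K nx e e') =
     (\<Sum>e\<in>edges_of K. (if e = {z,x} then - incR v e else 0) + (if e = {w,y} then - incR v e else 0)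
      + (if e = {y,z} then incR v e else 0) + (if e = {x,w} then incR v e else 0))"
    by (rule sum.cong) (auto simp: key algebra_simps)
  also have "\<dots> = - incR v {z,x} - incR v {w,y} + incR v {y,z} + incR v {x,w}"
    using E1 E2 by (simp add: sum.distrib)
  also have "\<dots> = 0" using zw c1 c2 by (auto simp: incR_def)
  finally show ?thesis .
qed

end
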